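(* Fix $\ell\geq2$, let $A=\ell\times\omega$, and fix a recursive bijection $\psi:(\ell-1)\times\omega\times\omega\to\omega$. For $\alpha\in\{0,1\}^\omega$ define $S_\alpha$ on $A$ by: $S_\alpha(a,b)$ holds iff $a=(i,n)$, $b=(i+1,m)$ for some $i<\ell-1$ with $\alpha_{\psi(i,n,m)}=1$. If $\alpha$ is a Kolmogorov–Chaitin complex string, then the ranked diagram $(A,S_\alpha)$, with levels $L_j=\{j\}\times\omega$, is $\ell$-generic, i.e. $\langle A,S_\alpha,\{0\}\times\omega,\ldots,\{\ell-1\}\times\omega\rangle$ is a model of $T_\ell$.
   Context: The signature has unary relations $L_0,\ldots,L_{\ell-1}$ and binary $S$. The theory $T_\ell$: (i) every $x$ satisfies some $L_j(x)$; (ii) no $x$ satisfies $L_i(x)\wedge L_j(x)$ for $i<j$; (iii) $S(x,y)$ and $L_i(x)$ with $i\le\ell-2$ imply $L_{i+1}(y)$; (iv) for each $i<\ell$ and all finite $X,Y\subseteq L_{i+1}$ with $X\cap Y=\emptyset$, $Z\subseteq L_i$, $X',Y'\subseteq L_{i-1}$ with $X'\cap Y'=\emptyset$ ($L_{-1},L_\ell$ read as empty), there is $z\in L_i\setminus Z$ with $S(z,x)$ for $x\in X$, $S(x',z)$ for $x'\in X'$, $\neg S(z,y)$ for $y\in Y$, $\neg S(y',z)$ for $y'\in Y'$. For $\alpha\in\{0,1\}^\omega$, $\overline{\alpha}(n)=\alpha_0\cdots\alpha_{n-1}$. Let $H(s)$ be the prefix-free Kolmogorov complexity of a binary word $s$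 relative to a fixed universal prefix algorithm. $\alpha$ is Kolmogorov–Chaitin complex if $\exists m\,\forall n\;H(\overline{\alpha}(n))\ge n-m$. *)

theory Defs
  imports Main "HOL-Library.Extended_Nat"
begin

datatype recf = Zf | Sf | Idf nat | Cnf recf "recf list" | Prf recf recf | Mnf recf

inductive rec_eval :: "recf \<Rightarrow> nat list \<Rightarrow> nat \<Rightarrow> bool" where
  zero: "rec_eval Zf xs 0"
| succ: "rec_eval Sf (x # xs) (Suc x)"
| proj: "i < length xs \<Longrightarrow> rec_eval (Idf i) xs (xs ! i)"
| comp: "length ys = length gs \<Longrightarrow> (\<forall>k < length gs. rec_eval (gs ! k) xs (ys ! k))
          \<Longrightarrow> rec_eval f ys z \<Longrightarrow> rec_eval (Cnf f gs) xs z"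
| pr0: "rec_eval f xs y \<Longrightarrow> rec_eval (Prf f g) (0 # xs) y"
| prS: "rec_eval (Prf f g) (n # xs) y \<Longrightarrow> rec_eval g (y # n # xs) z
          \<Longrightarrow> rec_eval (Prf f g) (Suc n # xs) z"
| mn: "rec_eval f (n # xs) 0 \<Longrightarrow> (\<forall>m < n. \<exists>y. rec_eval f (m # xs) (Suc y))
          \<Longrightarrow> rec_eval (Mnf f) xs n"

definition recursive3_on :: "(nat \<times> nat \<times> nat) set \<Rightarrow> (nat \<Rightarrow> nat \<Rightarrow> nat \<Rightarrow> nat) \<Rightarrow> bool" where
  "recursive3_on D f \<longleftrightarrow> (\<exists>c. \<forall>(i, n, m) \<in> D. rec_eval c [i, n, m] (f i n m))"

text \<open>Standard bijective coding of binary words as natural numbers.\<close>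
fun word_code :: "bool list \<Rightarrow> nat" where
  "word_code [] = 0"
| "word_code (b # w) = 2 * word_code w + (if b then 2 else 1)"

definition runs :: "recf \<Rightarrow> bool list \<Rightarrow> bool list \<Rightarrow> bool" where
  "runs c p s \<longleftrightarrow> rec_eval c [word_code p] (word_code s)"

definition halts :: "recf \<Rightarrow> bool list \<Rightarrow> bool" where
  "halts c p \<longleftrightarrow> (\<exists>s. runs c p s)"

definition prefix_free_machine :: "recf \<Rightarrow> bool" where
  "prefix_free_machine c \<longleftrightarrow>
     (\<forall>p r. halts c p \<longrightarrow> halts c (p @ r) \<longrightarrow> r = [])"

definition universal_prefix_machine :: "recf \<Rightarrow> bool" where
  "universal_prefix_machine u \<longleftrightarrow> prefix_free_machine u \<and>
     (\<forall>c. prefix_free_machine c \<longrightarrow>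
        (\<exists>k. \<forall>p s. runs c p s \<longrightarrow> (\<exists>q. runs u q s \<and> length q \<le> length p + k)))"

text \<open>Prefix-free Kolmogorov complexity relative to u (infinity if no program).\<close>
definition KH :: "recf \<Rightarrow> bool list \<Rightarrow> enat" where
  "KH u s = (INF p \<in> {p. runs u p s}. enat (length p))"

definition initial_segment :: "(nat \<Rightarrow> bool) \<Rightarrow> nat \<Rightarrow> bool list" where
  "initial_segment \<alpha> n = map \<alpha> [0..<n]"

definition KC_complex :: "recf \<Rightarrow> (nat \<Rightarrow> bool) \<Rightarrow> bool" where
  "KC_complex u \<alpha> \<longleftrightarrow> (\<exists>m::nat. \<forall>n. enat n \<le> KH u (initial_segment \<alpha> n) + enat m)"

text \<open>A structure with universe A, unary relations L 0, ..., L (ell-1) and binary S is a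
  model of T_ell. L_{-1} and L_ell are read as empty.\<close>
definition model_T :: "nat \<Rightarrow> 'a set \<Rightarrow> (nat \<Rightarrow> 'a set) \<Rightarrow> ('a \<Rightarrow> 'a \<Rightarrow> bool) \<Rightarrow> bool" where
  "model_T l A L S \<longleftrightarrow>
     (\<forall>x \<in> A. \<exists>j < l. x \<in> L j) \<and>
     (\<forall>x \<in> A. \<forall>i j. i < j \<and> j < l \<longrightarrow> \<not> (x \<in> L i \<and> x \<in> L j)) \<and>
     (\<forall>x \<in> A. \<forall>y \<in> A. \<forall>i. S x y \<and> x \<in> L i \<and> i + 2 \<le> l \<longrightarrow> y \<in> L (i + 1)) \<and>
     (\<forall>i < l. \<forall>X Y Z X' Y'.
        let Up = (if i + 1 < l then A \<inter> L (i + 1) else {});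
            Lo = (if 0 < i then A \<inter> L (i - 1) else {})
        in finite X \<and> finite Y \<and> X \<subseteq> Up \<and> Y \<subseteq> Up \<and> X \<inter> Y = {} \<and>
           finite Z \<and> Z \<subseteq> A \<inter> L i \<and>
           finite X' \<and> finite Y' \<and> X' \<subseteq> Lo \<and> Y' \<subseteq> Lo \<and> X' \<inter> Y' = {} \<longrightarrow>
           (\<exists>z \<in> (A \<inter> L i) - Z. (\<forall>x \<in> X. S z x) \<and> (\<forall>x' \<in> X'. S x' z) \<and>
                                  (\<forall>y \<in> Y. \<not> S z y) \<and> (\<forall>y' \<in> Y'. \<not> S y' z)))"

definition S_alpha :: "nat \<Rightarrow> (nat \<Rightarrow> nat \<Rightarrow> nat \<Rightarrow> nat) \<Rightarrow> (nat \<Rightarrow> bool)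
                       \<Rightarrow> nat \<times> nat \<Rightarrow> nat \<times> nat \<Rightarrow> bool" where
  "S_alpha l \<psi> \<alpha> a b \<longleftrightarrow>
     (\<exists>i n m. a = (i, n) \<and> b = (i + 1, m) \<and> i < l - 1 \<and> \<alpha> (\<psi> i n m))"

end

theory Submission
  imports Defs
begin


lemma rec_eval_det:
  assumes "rec_eval c xs y" shows "rec_eval c xs y' \<Longrightarrow> y' = y"
  using assms
proof (induction arbitrary: y' rule: rec_eval.induct)
  case (zero xs) from zero.prems show ?case by (cases rule: rec_eval.cases) (use zero in auto)
next
  case (succ x xs) from succ.prems show ?case by (cases rule: rec_eval.cases) (use succ in auto)
next
  case (proj i xs) from proj.prems show ?case by (cases rule: rec_eval.cases) (use proj in auto)
next
  case (comp ys gs xs f z)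
  from comp.prems show ?case
  proof (cases rule: rec_eval.cases)
    case (comp ys')
    have "ys' = ys"
      by (rule nth_equalityI) (use comp comp.hyps comp.IH in auto)
    then show ?thesis using comp comp.IH by auto
  qed
next
  case (pr0 f xs y g) from pr0.prems show ?case by (cases rule: rec_eval.cases) (use pr0 in auto)
next
  case (prS f g n xs y z)
  from prS.prems show ?case by (cases rule: rec_eval.cases) (use prS in auto)
next
  case (mn f n xs)
  note H = mn
  from mn.prems show ?case
  proof (cases rule: rec_eval.cases)
    case mn
    note mn2 = this
    show ?thesis
    proof (rule ccontr)
      assume "y' \<noteq> n"
      then consider "y' < n" | "n < y'" by linarith
      then show False
      proof cases
        case 1
        then obtain y where "\<forall>x. rec_eval f (y' # xs) x \<longrightarrow> x = Suc y" using H(3) by blast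
        then show False using mn2 by auto
      next
        case 2
        then obtain y where "rec_eval f (n # xs) (Suc y)" using mn2 by blast
        then show False using H(2) by fastforce
      qed
    qed
  qed
qed

definition rcomp :: "nat \<Rightarrow> (nat list \<Rightarrow> nat) \<Rightarrow> bool" where
  "rcomp n f \<longleftrightarrow> (\<exists>c. \<forall>xs. length xs = n \<longrightarrow> rec_eval c xs (f xs))"

definition rcompP :: "nat \<Rightarrow> (nat list \<Rightarrow> bool) \<Rightarrow> bool" where
  "rcompP n P \<longleftrightarrow> rcomp n (\<lambda>xs. if P xs then 1 else 0)"

lemma rcomp_cong: "rcomp n f \<Longrightarrow> (\<And>xs. length xs = n \<Longrightarrow> f xs = g xs) \<Longrightarrow> rcomp n g"
  unfolding rcomp_def by metis

lemma rcompP_cong: "rcompP n f \<Longrightarrow> (\<And>xs. length xs = n \<Longrightarrow> f xs = g xs) \<Longrightarrow> rcompP n g"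
  unfolding rcompP_def by (erule rcomp_cong) auto

lemma rcomp_zero: "rcomp n (\<lambda>xs. 0)"
  unfolding rcomp_def by (auto intro: rec_eval.zero)

lemma rcomp_proj: "i < n \<Longrightarrow> rcomp n (\<lambda>xs. xs ! i)"
  unfolding rcomp_def by (auto intro: rec_eval.proj)

lemma rcomp_comp1: "rcomp 1 f \<Longrightarrow> rcomp n g \<Longrightarrow> rcomp n (\<lambda>xs. f [g xs])"
proof -
  assume "rcomp 1 f" "rcomp n g"
  then obtain cf cg where f: "\<forall>xs. length xs = 1 \<longrightarrow> rec_eval cf xs (f xs)"
    and g: "\<forall>xs. length xs = n \<longrightarrow> rec_eval cg xs (g xs)" unfolding rcomp_def by blast
  show ?thesis unfolding rcomp_def
  proof (intro exI allI impI)
    fix xs :: "nat list" assume "length xs = n"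
    then show "rec_eval (Cnf cf [cg]) xs (f [g xs])"
      by (intro rec_eval.comp[where ys = "[g xs]"]) (use f g in auto)
  qed
qed

lemma rcomp_comp2: "rcomp 2 f \<Longrightarrow> rcomp n g \<Longrightarrow> rcomp n h \<Longrightarrow> rcomp n (\<lambda>xs. f [g xs, h xs])"
proof -
  assume "rcomp 2 f" "rcomp n g" "rcomp n h"
  then obtain cf cg ch where f: "\<forall>xs. length xs = 2 \<longrightarrow> rec_eval cf xs (f xs)"
    and g: "\<forall>xs. length xs = n \<longrightarrow> rec_eval cg xs (g xs)"
    and h: "\<forall>xs. length xs = n \<longrightarrow> rec_eval ch xs (h xs)" unfolding rcomp_def by blast
  show ?thesis unfolding rcomp_def
  proof (intro exI allI impI)
    fix xs :: "nat list" assume "length xs = n"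
    then show "rec_eval (Cnf cf [cg, ch]) xs (f [g xs, h xs])"
      by (intro rec_eval.comp[where ys = "[g xs, h xs]"]) (use f g h in \<open>auto simp: less_Suc_eq nth_Cons'\<close>)
  qed
qed

lemma rcomp_comp3: "rcomp 3 f \<Longrightarrow> rcomp n g \<Longrightarrow> rcomp n h \<Longrightarrow> rcomp n k \<Longrightarrow>
   rcomp n (\<lambda>xs. f [g xs, h xs, k xs])"
proof -
  assume "rcomp 3 f" "rcomp n g" "rcomp n h" "rcomp n k"
  then obtain cf cg ch ck where f: "\<forall>xs. length xs = 3 \<longrightarrow> rec_eval cf xs (f xs)"
    and g: "\<forall>xs. length xs = n \<longrightarrow> rec_eval cg xs (g xs)"
    and h: "\<forall>xs. length xs = n \<longrightarrow> rec_eval ch xs (h xs)"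
    and k: "\<forall>xs. length xs = n \<longrightarrow> rec_eval ck xs (k xs)" unfolding rcomp_def by blast
  show ?thesis unfolding rcomp_def
  proof (intro exI allI impI)
    fix xs :: "nat list" assume "length xs = n"
    then show "rec_eval (Cnf cf [cg, ch, ck]) xs (f [g xs, h xs, k xs])"
      by (intro rec_eval.comp[where ys = "[g xs, h xs, k xs]"]) (use f g h k in \<open>auto simp: less_Suc_eq nth_Cons'\<close>)
  qed
qed

lemma rcomp_suc: "rcomp n g \<Longrightarrow> rcomp n (\<lambda>xs. Suc (g xs))"
proof -
  have "rcomp 1 (\<lambda>xs. Suc (hd xs))" unfolding rcomp_def
    by (rule exI[of _ Sf]) (auto simp: length_Suc_conv intro: rec_eval.succ)
  then show "rcomp n g \<Longrightarrow> rcomp n (\<lambda>xs. Suc (g xs))" by (drule rcomp_comp1) auto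
qed

lemma rcomp_const: "rcomp n (\<lambda>xs. k)"
  by (induction k) (auto intro: rcomp_zero rcomp_suc)

definition primr :: "(nat list \<Rightarrow> nat) \<Rightarrow> (nat list \<Rightarrow> nat) \<Rightarrow> nat \<Rightarrow> nat list \<Rightarrow> nat" where
  "primr f g a xs = rec_nat (f xs) (\<lambda>k r. g (r # k # xs)) a"

lemma rcomp_primr: "rcomp n f \<Longrightarrow> rcomp (Suc (Suc n)) g \<Longrightarrow> rcomp (Suc n) (\<lambda>xs. primr f g (hd xs) (tl xs))"
proof -
  assume "rcomp n f" "rcomp (Suc (Suc n)) g"
  then obtain cf cg where f: "\<forall>xs. length xs = n \<longrightarrow> rec_eval cf xs (f xs)"
    and g: "\<forall>xs. length xs = Suc (Suc n) \<longrightarrow> rec_eval cg xs (g xs)" unfolding rcomp_def by blast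
  have "rec_eval (Prf cf cg) (a # xs) (primr f g a xs)" if "length xs = n" for a xs
  proof (induction a)
    case 0 then show ?case using f that by (auto simp: primr_def intro: rec_eval.pr0)
  next
    case (Suc a) then show ?case using g that by (auto simp: primr_def intro: rec_eval.prS)
  qed
  then show ?thesis unfolding rcomp_def by (metis length_Suc_conv list.sel(1,3))
qed


lemma rcomp_un: "rcomp 1 (\<lambda>xs. F (xs!0)) \<Longrightarrow> rcomp n f \<Longrightarrow> rcomp n (\<lambda>xs. F (f xs))"
  by (drule (1) rcomp_comp1) simp

lemma rcomp_bin: "rcomp 2 (\<lambda>xs. F (xs!0) (xs!1)) \<Longrightarrow> rcomp n f \<Longrightarrow> rcomp n g \<Longrightarrow> rcomp n (\<lambda>xs. F (f xs) (g xs))"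
  by (drule (2) rcomp_comp2) simp

lemma rcomp_primr1: "rcomp 1 f \<Longrightarrow> rcomp 3 g \<Longrightarrow> rcomp 2 (\<lambda>xs. primr f g (xs!0) [xs!1])"
  using rcomp_primr[of 1 f g] apply (simp add: eval_nat_numeral)
  apply (erule rcomp_cong)
  apply (auto simp: numeral_eq_Suc length_Suc_conv)
  done

lemma rcomp_primr0: "rcomp 0 f \<Longrightarrow> rcomp 2 g \<Longrightarrow> rcomp 1 (\<lambda>xs. primr f g (xs!0) [])"
  using rcomp_primr[of 0 f g] apply (simp add: eval_nat_numeral)
  apply (erule rcomp_cong)
  apply (auto simp: numeral_eq_Suc length_Suc_conv)
  done

lemma len2: "length xs = 2 \<longleftrightarrow> (\<exists>a b. xs = [a, b])"
  by (auto simp: numeral_eq_Suc length_Suc_conv)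
lemma len1: "length xs = 1 \<longleftrightarrow> (\<exists>a. xs = [a])"
  by (auto simp: length_Suc_conv)
lemma len3: "length xs = 3 \<longleftrightarrow> (\<exists>a b c. xs = [a, b, c])"
  by (auto simp: numeral_eq_Suc length_Suc_conv)

lemma rcomp_add: "rcomp n f \<Longrightarrow> rcomp n g \<Longrightarrow> rcomp n (\<lambda>xs. f xs + g xs)"
proof -
  have "rcomp 2 (\<lambda>xs. primr (\<lambda>xs. xs!0) (\<lambda>ys. Suc (ys!0)) (xs!0) [xs!1])"
    by (intro rcomp_primr1 rcomp_suc rcomp_proj) auto
  moreover have "primr (\<lambda>xs. xs!0) (\<lambda>ys. Suc (ys!0)) a [b] = a + b" for a b
    by (induction a) (auto simp: primr_def)
  ultimately have "rcomp 2 (\<lambda>xs. xs!0 + xs!1)" by simp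
  then show "rcomp n f \<Longrightarrow> rcomp n g \<Longrightarrow> rcomp n (\<lambda>xs. f xs + g xs)"
    by (rule rcomp_bin[where F = "(+)"])
qed

lemma rcomp_mult: "rcomp n f \<Longrightarrow> rcomp n g \<Longrightarrow> rcomp n (\<lambda>xs. f xs * g xs)"
proof -
  have "rcomp 2 (\<lambda>xs. primr (\<lambda>xs. 0) (\<lambda>ys. ys!0 + ys!2) (xs!0) [xs!1])"
    by (intro rcomp_primr1 rcomp_add rcomp_proj rcomp_zero) auto
  moreover have "primr (\<lambda>xs. 0) (\<lambda>ys. ys!0 + ys!2) a [b] = a * b" for a b
    by (induction a) (auto simp: primr_def)
  ultimately have "rcomp 2 (\<lambda>xs. xs!0 * xs!1)" by simp
  then show "rcomp n f \<Longrightarrow> rcomp n g \<Longrightarrow> rcomp n (\<lambda>xs. f xs * g xs)"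
    by (rule rcomp_bin[where F = "(*)"])
qed

lemma rcomp_pred: "rcomp n f \<Longrightarrow> rcomp n (\<lambda>xs. f xs - 1)"
proof -
  have "rcomp 1 (\<lambda>xs. primr (\<lambda>xs. 0) (\<lambda>ys. ys!1) (xs!0) [])"
    by (intro rcomp_primr0 rcomp_proj rcomp_zero) auto
  moreover have "primr (\<lambda>xs. 0) (\<lambda>ys. ys!1) a [] = a - 1" for a
    by (induction a) (auto simp: primr_def)
  ultimately have "rcomp 1 (\<lambda>xs. xs!0 - 1)" by simp
  then show "rcomp n f \<Longrightarrow> rcomp n (\<lambda>xs. f xs - 1)"
    by (rule rcomp_un[where F = "\<lambda>a. a - 1"])
qed

lemma rcomp_sub: "rcomp n f \<Longrightarrow> rcomp n g \<Longrightarrow> rcomp n (\<lambda>xs. f xs - g xs)"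
proof -
  have "rcomp 2 (\<lambda>xs. primr (\<lambda>xs. xs!0) (\<lambda>ys. ys!0 - 1) (xs!0) [xs!1])"
    by (intro rcomp_primr1 rcomp_pred rcomp_proj) auto
  moreover have "primr (\<lambda>xs. xs!0) (\<lambda>ys. ys!0 - 1) a [b] = b - a" for a b
    by (induction a) (auto simp: primr_def)
  ultimately have "rcomp 2 (\<lambda>xs. xs!1 - xs!0)" by simp
  then show "rcomp n f \<Longrightarrow> rcomp n g \<Longrightarrow> rcomp n (\<lambda>xs. f xs - g xs)"
    using rcomp_bin[where F = "\<lambda>a b. b - a" and f = g and g = f] by blast
qed

lemma rcomp_pow2: "rcomp n f \<Longrightarrow> rcomp n (\<lambda>xs. 2 ^ f xs)"
proof -
  have "rcomp 1 (\<lambda>xs. primr (\<lambda>xs. 1) (\<lambda>ys. 2 * ys!0) (xs!0) [])"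
    by (intro rcomp_primr0 rcomp_mult rcomp_const rcomp_proj) auto
  moreover have "primr (\<lambda>xs. 1) (\<lambda>ys. 2 * ys!0) a [] = 2 ^ a" for a
    by (induction a) (auto simp: primr_def)
  ultimately have "rcomp 1 (\<lambda>xs. 2 ^ (xs!0))" by simp
  then show "rcomp n f \<Longrightarrow> rcomp n (\<lambda>xs. 2 ^ f xs)"
    by (rule rcomp_un[where F = "\<lambda>a. 2 ^ a"])
qed

lemma rcomp_mod2: "rcomp n f \<Longrightarrow> rcomp n (\<lambda>xs. f xs mod 2)"
proof -
  have "rcomp 1 (\<lambda>xs. primr (\<lambda>xs. 0) (\<lambda>ys. 1 - ys!0) (xs!0) [])"
    by (intro rcomp_primr0 rcomp_sub rcomp_const rcomp_proj) auto
  moreover have "primr (\<lambda>xs. 0) (\<lambda>ys. 1 - ys!0) a [] = a mod 2" for a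
    by (induction a) (auto simp: primr_def mod_Suc)
  ultimately have "rcomp 1 (\<lambda>xs. xs!0 mod 2)" by simp
  then show "rcomp n f \<Longrightarrow> rcomp n (\<lambda>xs. f xs mod 2)"
    by (rule rcomp_un[where F = "\<lambda>a. a mod 2"])
qed

lemma div2_Suc: "Suc a div 2 = a div 2 + a mod 2" by presburger

lemma rcomp_div2: "rcomp n f \<Longrightarrow> rcomp n (\<lambda>xs. f xs div 2)"
proof -
  have "rcomp 1 (\<lambda>xs. primr (\<lambda>xs. 0) (\<lambda>ys. ys!0 + ys!1 mod 2) (xs!0) [])"
    by (intro rcomp_primr0 rcomp_add rcomp_mod2 rcomp_const rcomp_proj) auto
  moreover have "primr (\<lambda>xs. 0) (\<lambda>ys. ys!0 + ys!1 mod 2) a [] = a div 2" for a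
    by (induction a) (auto simp: primr_def div2_Suc)
  ultimately have "rcomp 1 (\<lambda>xs. xs!0 div 2)" by simp
  then show "rcomp n f \<Longrightarrow> rcomp n (\<lambda>xs. f xs div 2)"
    by (rule rcomp_un[where F = "\<lambda>a. a div 2"])
qed

definition tlc :: "nat \<Rightarrow> nat" where "tlc y = (y - 1) div 2"

lemma rcomp_iter: "rcomp n f \<Longrightarrow> rcomp n g \<Longrightarrow> rcomp n (\<lambda>xs. (tlc ^^ f xs) (g xs))"
proof -
  have "rcomp 2 (\<lambda>xs. primr (\<lambda>xs. xs!0) (\<lambda>ys. (ys!0 - 1) div 2) (xs!0) [xs!1])"
    by (intro rcomp_primr1 rcomp_div2 rcomp_pred rcomp_proj) auto
  moreover have "primr (\<lambda>xs. xs!0) (\<lambda>ys. (ys!0 - 1) div 2) a [b] = (tlc ^^ a) b" for a b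
    by (induction a) (auto simp: primr_def tlc_def)
  ultimately have "rcomp 2 (\<lambda>xs. (tlc ^^ (xs!0)) (xs!1))" by simp
  then show "rcomp n f \<Longrightarrow> rcomp n g \<Longrightarrow> rcomp n (\<lambda>xs. (tlc ^^ f xs) (g xs))"
    by (rule rcomp_bin[where F = "\<lambda>a b. (tlc ^^ a) b"])
qed

lemma rcomp_bsum: "rcomp 2 (\<lambda>xs. F (xs!0) (xs!1)) \<Longrightarrow> rcomp n g \<Longrightarrow> rcomp n h \<Longrightarrow>
   rcomp n (\<lambda>xs. \<Sum>i<g xs. F i (h xs))"
proof -
  assume F: "rcomp 2 (\<lambda>xs. F (xs!0) (xs!1))"
  have "rcomp 3 (\<lambda>ys. F (ys!1) (ys!2))"
    by (rule rcomp_bin[OF F]) (auto intro: rcomp_proj)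
  then have "rcomp 2 (\<lambda>xs. primr (\<lambda>xs. 0) (\<lambda>ys. ys!0 + F (ys!1) (ys!2)) (xs!0) [xs!1])"
    by (intro rcomp_primr1 rcomp_add rcomp_proj rcomp_zero) auto
  moreover have "primr (\<lambda>xs. 0) (\<lambda>ys. ys!0 + F (ys!1) (ys!2)) a [b] = (\<Sum>i<a. F i b)" for a b
    by (induction a) (auto simp: primr_def)
  ultimately have "rcomp 2 (\<lambda>xs. \<Sum>i<xs!0. F i (xs!1))" by simp
  then show "rcomp n g \<Longrightarrow> rcomp n h \<Longrightarrow> rcomp n (\<lambda>xs. \<Sum>i<g xs. F i (h xs))"
    by (rule rcomp_bin[where F = "\<lambda>a b. \<Sum>i<a. F i b"])
qed

lemma rcompP_le: "rcomp n f \<Longrightarrow> rcomp n g \<Longrightarrow> rcompP n (\<lambda>xs. f xs \<le> g xs)"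
  unfolding rcompP_def
  apply (rule rcomp_cong[where f = "\<lambda>xs. 1 - (f xs - g xs)"])
   apply (intro rcomp_sub rcomp_const; assumption)
  apply auto
  done

lemma rcompP_not: "rcompP n P \<Longrightarrow> rcompP n (\<lambda>xs. \<not> P xs)"
proof -
  assume "rcompP n P"
  then have "rcomp n (\<lambda>xs. 1 - (if P xs then 1 else 0))"
    unfolding rcompP_def by (intro rcomp_sub rcomp_const)
  then show ?thesis unfolding rcompP_def by (rule rcomp_cong) auto
qed

lemma rcompP_conj: "rcompP n P \<Longrightarrow> rcompP n Q \<Longrightarrow> rcompP n (\<lambda>xs. P xs \<and> Q xs)"
proof -
  assume "rcompP n P" "rcompP n Q"
  then have "rcomp n (\<lambda>xs. (if P xs then 1 else 0) * (if Q xs then 1 else 0))"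
    unfolding rcompP_def by (intro rcomp_mult)
  then show ?thesis unfolding rcompP_def by (rule rcomp_cong) auto
qed

lemma rcompP_disj: "rcompP n P \<Longrightarrow> rcompP n Q \<Longrightarrow> rcompP n (\<lambda>xs. P xs \<or> Q xs)"
proof -
  assume "rcompP n P" "rcompP n Q"
  then have "rcompP n (\<lambda>xs. \<not> (\<not> P xs \<and> \<not> Q xs))"
    by (intro rcompP_not rcompP_conj)
  then show ?thesis by (rule rcompP_cong) auto
qed

lemma rcompP_eq: "rcomp n f \<Longrightarrow> rcomp n g \<Longrightarrow> rcompP n (\<lambda>xs. f xs = g xs)"
proof -
  assume "rcomp n f" "rcomp n g"
  then have "rcompP n (\<lambda>xs. f xs \<le> g xs \<and> g xs \<le> f xs)"
    by (intro rcompP_conj rcompP_le)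
  then show ?thesis by (rule rcompP_cong) auto
qed

lemma rcompP_less: "rcomp n f \<Longrightarrow> rcomp n g \<Longrightarrow> rcompP n (\<lambda>xs. f xs < g xs)"
proof -
  assume "rcomp n f" "rcomp n g"
  then have "rcompP n (\<lambda>xs. \<not> g xs \<le> f xs)"
    by (intro rcompP_not rcompP_le)
  then show ?thesis by (rule rcompP_cong) auto
qed

lemma rcompP_True: "rcompP n (\<lambda>xs. True)"
  unfolding rcompP_def by (simp add: rcomp_const)

lemma rcompP_iff: "rcompP n P \<Longrightarrow> rcompP n Q \<Longrightarrow> rcompP n (\<lambda>xs. P xs = Q xs)"
proof -
  assume "rcompP n P" "rcompP n Q"
  then have "rcompP n (\<lambda>xs. (P xs \<and> Q xs) \<or> (\<not> P xs \<and> \<not> Q xs))"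
    by (intro rcompP_disj rcompP_conj rcompP_not)
  then show ?thesis by (rule rcompP_cong) auto
qed

lemma rcomp_if: "rcompP n P \<Longrightarrow> rcomp n f \<Longrightarrow> rcomp n g \<Longrightarrow> rcomp n (\<lambda>xs. if P xs then f xs else g xs)"
  unfolding rcompP_def
  apply (rule rcomp_cong[where f = "\<lambda>xs. (if P xs then 1 else 0) * f xs + (1 - (if P xs then 1 else 0)) * g xs"])
   apply (intro rcomp_add rcomp_mult rcomp_sub rcomp_const; assumption)
  apply auto
  done

lemma rcompP_ball: "rcompP 2 (\<lambda>xs. P (xs!0) (xs!1)) \<Longrightarrow> rcomp n g \<Longrightarrow> rcomp n h \<Longrightarrow>
   rcompP n (\<lambda>xs. \<forall>i<g xs. P i (h xs))"
proof -
  assume P: "rcompP 2 (\<lambda>xs. P (xs!0) (xs!1))" and g: "rcomp n g" and h: "rcomp n h"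
  have "rcomp 2 (\<lambda>xs. if P (xs!0) (xs!1) then 0 else 1)"
    by (intro rcomp_if P rcomp_const)
  then have "rcomp n (\<lambda>xs. \<Sum>i<g xs. (\<lambda>a b. if P a b then 0 else 1) i (h xs))"
    using rcomp_bsum[where F = "\<lambda>a b. if P a b then 0 else 1"] g h by auto
  then have "rcompP n (\<lambda>xs. (\<Sum>i<g xs. (if P i (h xs) then 0 else 1)) \<le> (0::nat))"
    by (intro rcompP_le rcomp_const) simp
  then show ?thesis by (rule rcompP_cong) auto
qed

lemma rcompP_bex: "rcompP 2 (\<lambda>xs. P (xs!0) (xs!1)) \<Longrightarrow> rcomp n g \<Longrightarrow> rcomp n h \<Longrightarrow>
   rcompP n (\<lambda>xs. \<exists>i<g xs. P i (h xs))"
proof -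
  assume P: "rcompP 2 (\<lambda>xs. P (xs!0) (xs!1))" and g: "rcomp n g" and h: "rcomp n h"
  have "rcompP 2 (\<lambda>xs. \<not> P (xs!0) (xs!1))" using P by (rule rcompP_not)
  then have "rcompP n (\<lambda>xs. \<forall>i<g xs. (\<lambda>a b. \<not> P a b) i (h xs))"
    using rcompP_ball[where P = "\<lambda>a b. \<not> P a b"] g h by auto
  then have "rcompP n (\<lambda>xs. \<not> (\<forall>i<g xs. \<not> P i (h xs)))"
    by (intro rcompP_not) simp
  then show ?thesis by (rule rcompP_cong) auto
qed


lemma word_code_inj: "word_code v = word_code w \<Longrightarrow> v = w"
proof (induction v arbitrary: w)
  case Nil then show ?case by (cases w) (auto split: if_splits)
next
  case (Cons a v) then show ?case by (cases w) (auto split: if_splits, presburger+)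
qed

lemma word_code_surj: "\<exists>w. word_code w = y"
proof (induction y rule: less_induct)
  case (less y)
  show ?case
  proof (cases "y = 0")
    case True then show ?thesis by (intro exI[of _ "[]"]) simp
  next
    case False
    have "(y - 1) div 2 < y" using False by simp
    then obtain w where w: "word_code w = (y - 1) div 2" using less by blast
    show ?thesis
    proof (cases "even y")
      case True
      then show ?thesis using False w by (intro exI[of _ "True # w"]) auto
    next
      case odd: False
      then show ?thesis using False w by (intro exI[of _ "False # w"]) (auto elim!: oddE)
    qed
  qed
qed

lemma word_code_range: "2 ^ length w \<le> word_code w + 1 \<and> word_code w + 2 \<le> 2 ^ (length w + 1)"
  by (induction w) auto

lemma word_code_len:
  assumes "2 ^ L \<le> word_code w + 1" "word_code w + 2 \<le> 2 ^ (L + 1)"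
  shows "length w = L"
proof (rule ccontr)
  assume "length w \<noteq> L"
  then consider "length w < L" | "L < length w" by linarith
  then show False
  proof cases
    case 1
    then have "2 ^ (length w + 1) \<le> (2::nat) ^ L" by (intro power_increasing) auto
    then show False using assms word_code_range[of w] by linarith
  next
    case 2
    then have "2 ^ (L + 1) \<le> (2::nat) ^ length w" by (intro power_increasing) auto
    then show False using assms word_code_range[of w] by linarith
  qed
qed

lemma word_code_append: "word_code (a @ b) = word_code a + 2 ^ length a * word_code b"
  by (induction a) auto

lemma tlc_code: "tlc (word_code w) = word_code (tl w)"
  by (cases w) (auto simp: tlc_def)

lemma iter_tlc_code: "(tlc ^^ j) (word_code w) = word_code (drop j w)"
  by (induction j) (auto simp: tlc_code drop_Suc tl_drop)

definition bitb :: "nat \<Rightarrow> nat \<Rightarrow> bool" where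
  "bitb y j \<longleftrightarrow> even ((tlc ^^ j) y) \<and> 0 < (tlc ^^ j) y"

lemma bitb_code: "bitb (word_code w) j \<longleftrightarrow> j < length w \<and> w ! j"
proof (cases "j < length w")
  case True
  then have "drop j w = w ! j # drop (Suc j) w" by (simp add: Cons_nth_drop_Suc)
  then show ?thesis unfolding bitb_def iter_tlc_code using True by auto
next
  case False
  then show ?thesis unfolding bitb_def iter_tlc_code by auto
qed

lemma rcompP_bitb: "rcomp n f \<Longrightarrow> rcomp n g \<Longrightarrow> rcompP n (\<lambda>xs. bitb (f xs) (g xs))"
proof -
  assume f: "rcomp n f" and g: "rcomp n g"
  have "rcompP n (\<lambda>xs. (tlc ^^ g xs) (f xs) mod 2 = 0 \<and> 0 < (tlc ^^ g xs) (f xs))"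
    by (intro rcompP_conj rcompP_eq rcompP_less rcomp_mod2 rcomp_iter rcomp_const f g)
  then show ?thesis by (rule rcompP_cong) (auto simp: bitb_def)
qed


locale mach =
  fixes ps :: "nat \<Rightarrow> nat \<Rightarrow> nat \<Rightarrow> nat" and i0 n0 M :: nat and cs :: "(bool \<times> nat \<times> bool) list"
  assumes ps_up: "(\<exists>c\<in>set cs. fst c) \<Longrightarrow> rcomp 2 (\<lambda>xs. ps i0 (xs!0) (xs!1))"
    and ps_down: "rcomp 2 (\<lambda>xs. ps (i0 - 1) (xs!0) (xs!1))"
begin

definition pos :: "bool \<times> nat \<times> bool \<Rightarrow> nat \<Rightarrow> nat" where
  "pos c b = (if fst c then ps i0 (n0 + b) (fst (snd c)) else ps (i0 - 1) (fst (snd c)) (n0 + b))"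

definition match :: "nat \<Rightarrow> nat \<Rightarrow> bool" where
  "match y b \<longleftrightarrow> (\<forall>c\<in>set cs. bitb y (pos c b) = snd (snd c))"

definition blocksum :: "nat \<Rightarrow> nat" where
  "blocksum b = sum_list (map (\<lambda>c. Suc (pos c b)) cs)"

definition Bf :: "nat \<Rightarrow> nat" where "Bf t = (2 * t + 1) * M"
definition Nf :: "nat \<Rightarrow> nat" where "Nf t = (\<Sum>b<Bf t. blocksum b)"
definition Lf :: "nat \<Rightarrow> nat" where "Lf t = Nf t - (2 * t + 1)"
definition good :: "nat \<Rightarrow> nat \<Rightarrow> bool" where "good y B \<longleftrightarrow> (\<forall>b<B. \<not> match y b)"
definition rank :: "nat \<Rightarrow> nat \<Rightarrow> nat" where
  "rank y t = (\<Sum>y'<y. if 2 ^ Nf t \<le> y' + 1 \<and> good y' (Bf t) then 1 else 0)"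
definition tdec :: "nat \<Rightarrow> nat" where
  "tdec x = (\<Sum>j<x. if (\<forall>j'<Suc j. bitb x j') then 1 else 0)"
definition ed :: "nat \<Rightarrow> nat" where "ed x = (tlc ^^ Suc (tdec x)) x"

definition Phi :: "nat \<Rightarrow> nat \<Rightarrow> bool" where
  "Phi x y \<longleftrightarrow> x + 2 = 2 ^ (tdec x + 1) + 2 ^ tdec x + 2 ^ (tdec x + 1) * ed x
     \<and> 2 ^ Lf (tdec x) \<le> ed x + 1 \<and> ed x + 2 \<le> 2 ^ (Lf (tdec x) + 1)
     \<and> 2 ^ Nf (tdec x) \<le> y + 1 \<and> y + 2 \<le> 2 ^ (Nf (tdec x) + 1)
     \<and> good y (Bf (tdec x)) \<and> rank y (tdec x) + 2 ^ Lf (tdec x) = ed x + 1"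

lemma rcomp_pos: "c \<in> set cs \<Longrightarrow> rcomp n f \<Longrightarrow> rcomp n (\<lambda>xs. pos c (f xs))"
proof -
  assume c: "c \<in> set cs" and f: "rcomp n f"
  show ?thesis
  proof (cases "fst c")
    case True
    then have "rcomp 2 (\<lambda>xs. ps i0 (xs!0) (xs!1))" using ps_up c by blast
    then have "rcomp n (\<lambda>xs. ps i0 (n0 + f xs) (fst (snd c)))"
      by (rule rcomp_bin[where F = "ps i0"]) (intro rcomp_add rcomp_const f)+
    then show ?thesis by (rule rcomp_cong) (simp add: pos_def True)
  next
    case False
    have "rcomp n (\<lambda>xs. ps (i0 - 1) (fst (snd c)) (n0 + f xs))"
      by (rule rcomp_bin[OF ps_down]) (intro rcomp_add rcomp_const f)+
    then show ?thesis by (rule rcomp_cong) (simp add: pos_def False)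
  qed
qed

lemma rcompP_match_aux: "set cs' \<subseteq> set cs \<Longrightarrow> rcomp n f \<Longrightarrow> rcomp n g \<Longrightarrow>
  rcompP n (\<lambda>xs. \<forall>c\<in>set cs'. bitb (f xs) (pos c (g xs)) = snd (snd c))"
proof (induction cs')
  case Nil then show ?case by (simp add: rcompP_True)
next
  case (Cons c cs')
  then have "rcompP n (\<lambda>xs. bitb (f xs) (pos c (g xs)) = snd (snd c) \<and>
                 (\<forall>c\<in>set cs'. bitb (f xs) (pos c (g xs)) = snd (snd c)))"
    by (intro rcompP_conj rcompP_iff rcompP_bitb rcomp_pos) (auto simp: rcompP_def rcomp_const)
  then show ?case by (rule rcompP_cong) auto
qed

lemma rcompP_match: "rcomp n f \<Longrightarrow> rcomp n g \<Longrightarrow> rcompP n (\<lambda>xs. match (f xs) (g xs))"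
  unfolding match_def by (rule rcompP_match_aux) auto

lemma rcomp_blocksum_aux: "set cs' \<subseteq> set cs \<Longrightarrow> rcomp n g \<Longrightarrow>
  rcomp n (\<lambda>xs. sum_list (map (\<lambda>c. Suc (pos c (g xs))) cs'))"
proof (induction cs')
  case Nil then show ?case by (simp add: rcomp_const)
next
  case (Cons c cs')
  then show ?case by (simp, intro rcomp_add rcomp_suc rcomp_pos) auto
qed

lemma rcomp_blocksum: "rcomp n g \<Longrightarrow> rcomp n (\<lambda>xs. blocksum (g xs))"
  unfolding blocksum_def by (rule rcomp_blocksum_aux) auto

lemma rcomp_Bf: "rcomp n g \<Longrightarrow> rcomp n (\<lambda>xs. Bf (g xs))"
  unfolding Bf_def by (intro rcomp_mult rcomp_add rcomp_const)

lemma rcomp_Nf: "rcomp n g \<Longrightarrow> rcomp n (\<lambda>xs. Nf (g xs))"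
proof -
  assume g: "rcomp n g"
  have "rcomp 2 (\<lambda>xs. blocksum (xs!0))" by (intro rcomp_blocksum rcomp_proj) auto
  then have "rcomp n (\<lambda>xs. \<Sum>i<Bf (g xs). (\<lambda>a b. blocksum a) i (g xs))"
    by (intro rcomp_bsum[where F = "\<lambda>a b. blocksum a" and h = g] rcomp_Bf g) simp
  then show ?thesis unfolding Nf_def by simp
qed

lemma rcomp_Lf: "rcomp n g \<Longrightarrow> rcomp n (\<lambda>xs. Lf (g xs))"
  unfolding Lf_def by (intro rcomp_sub rcomp_Nf rcomp_add rcomp_mult rcomp_const)

lemma rcompP_good: "rcomp n f \<Longrightarrow> rcomp n g \<Longrightarrow> rcompP n (\<lambda>xs. good (f xs) (g xs))"
proof -
  assume f: "rcomp n f" and g: "rcomp n g"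
  have "rcompP 2 (\<lambda>xs. \<not> match (xs!1) (xs!0))" by (intro rcompP_not rcompP_match rcomp_proj) auto
  then have "rcompP n (\<lambda>xs. \<forall>i<g xs. (\<lambda>a b. \<not> match b a) i (f xs))"
    by (intro rcompP_ball[where P = "\<lambda>a b. \<not> match b a"] f g) simp
  then show ?thesis unfolding good_def by simp
qed

lemma rcomp_rank: "rcomp n f \<Longrightarrow> rcomp n g \<Longrightarrow> rcomp n (\<lambda>xs. rank (f xs) (g xs))"
proof -
  assume f: "rcomp n f" and g: "rcomp n g"
  have "rcomp 2 (\<lambda>xs. if 2 ^ Nf (xs!1) \<le> xs!0 + 1 \<and> good (xs!0) (Bf (xs!1)) then 1 else 0)"
    by (intro rcomp_if rcompP_conj rcompP_le rcomp_pow2 rcomp_Nf rcomp_add rcomp_proj rcomp_const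
        rcompP_good rcomp_Bf) auto
  then have "rcomp n (\<lambda>xs. \<Sum>i<f xs. (\<lambda>a b. if 2 ^ Nf b \<le> a + 1 \<and> good a (Bf b) then 1 else 0) i (g xs))"
    by (intro rcomp_bsum f g) simp
  then show ?thesis unfolding rank_def by simp
qed

lemma rcomp_tdec: "rcomp n f \<Longrightarrow> rcomp n (\<lambda>xs. tdec (f xs))"
proof -
  assume f: "rcomp n f"
  have "rcompP 2 (\<lambda>xs. bitb (xs!1) (xs!0))" by (intro rcompP_bitb rcomp_proj) auto
  then have "rcompP 2 (\<lambda>xs. \<forall>i<Suc (xs!0). (\<lambda>a b. bitb b a) i (xs!1))"
    by (intro rcompP_ball[where P = "\<lambda>a b. bitb b a"] rcomp_suc rcomp_proj) auto
  then have "rcomp 2 (\<lambda>xs. if \<forall>i<Suc (xs!0). bitb (xs!1) i then 1 else 0)"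
    by (intro rcomp_if rcomp_const) simp
  then have "rcomp n (\<lambda>xs. \<Sum>i<f xs. (\<lambda>a b. if \<forall>i<Suc a. bitb b i then 1 else 0) i (f xs))"
    by (intro rcomp_bsum f) simp
  then show ?thesis unfolding tdec_def by simp
qed

lemma rcomp_ed: "rcomp n f \<Longrightarrow> rcomp n (\<lambda>xs. ed (f xs))"
  unfolding ed_def by (intro rcomp_iter rcomp_suc rcomp_tdec)

lemma rcompP_Phi: "rcompP 2 (\<lambda>xs. Phi (xs!1) (xs!0))"
proof -
  have p0: "rcomp 2 (\<lambda>xs. xs!0)" and p1: "rcomp 2 (\<lambda>xs. xs!1)" by (auto intro: rcomp_proj)
  show ?thesis unfolding Phi_def
    by (intro rcompP_conj rcompP_eq rcompP_le rcomp_add rcomp_sub rcomp_mult rcomp_pow2 rcomp_const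
        rcomp_tdec rcomp_ed rcomp_Lf rcomp_Nf rcomp_rank rcompP_good rcomp_Bf p0 p1)
qed

end


lemma code_repT: "word_code (replicate t True) + 2 = 2 ^ (t + 1)"
  by (induction t) auto

lemma code_prog: "word_code (replicate t True @ False # w) + 2 = 2 ^ (t + 1) + 2 ^ t + 2 ^ (t + 1) * word_code w"
proof -
  have "word_code (replicate t True @ False # w) + 2 = (word_code (replicate t True) + 2) + 2 ^ t * (2 * word_code w + 1)"
    by (simp add: word_code_append)
  also have "\<dots> = 2 ^ (t + 1) + 2 ^ t + 2 ^ (t + 1) * word_code w" unfolding code_repT by (simp add: algebra_simps)
  finally show ?thesis .
qed

lemma rep_eq: "replicate t True @ False # v = replicate t' True @ False # w \<Longrightarrow> t = t' \<and> v = w"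
proof (induction t arbitrary: t')
  case 0 then show ?case by (cases t') auto
next
  case (Suc t) then show ?case by (cases t') auto
qed

context mach
begin

lemma machine_exists: "\<exists>c. \<forall>x y. rec_eval c [x] y \<longleftrightarrow> Phi x y \<and> (\<forall>m<y. \<not> Phi x m)"
proof -
  have "rcomp 2 (\<lambda>xs. if Phi (xs!1) (xs!0) then 0 else 1)"
    by (intro rcomp_if rcompP_Phi rcomp_const)
  then obtain cF where cF: "\<And>xs. length xs = 2 \<Longrightarrow> rec_eval cF xs (if Phi (xs!1) (xs!0) then 0 else 1)"
    unfolding rcomp_def by blast
  have ev: "rec_eval cF [a, b] v \<longleftrightarrow> v = (if Phi b a then 0 else 1)" for a b v
    using cF[of "[a, b]"] rec_eval_det by fastforce
  show ?thesis
  proof (intro exI allI iffI)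
    fix x y assume "rec_eval (Mnf cF) [x] y"
    then show "Phi x y \<and> (\<forall>m<y. \<not> Phi x m)"
      by (cases rule: rec_eval.cases) (auto simp: ev split: if_splits)
  next
    fix x y assume "Phi x y \<and> (\<forall>m<y. \<not> Phi x m)"
    then show "rec_eval (Mnf cF) [x] y"
      by (intro rec_eval.mn) (auto simp: ev)
  qed
qed

lemma tdec_prog: "tdec (word_code (replicate t True @ False # w)) = t"
proof -
  let ?p = "replicate t True @ False # w"
  let ?x = "word_code ?p"
  have b: "bitb ?x j \<longleftrightarrow> j < t \<or> (t < j \<and> j < t + 1 + length w \<and> w ! (j - t - 1))" for j
    unfolding bitb_code by (auto simp: nth_append nth_Cons' split: if_splits)
  have iff: "(\<forall>j'<Suc j. bitb ?x j') \<longleftrightarrow> j < t" for j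
  proof
    assume "\<forall>j'<Suc j. bitb ?x j'"
    then have "j < t \<or> \<not> t < Suc j" using b[of t] by auto
    then show "j < t" by linarith
  next
    assume "j < t" then show "\<forall>j'<Suc j. bitb ?x j'" using b by auto
  qed
  have tx: "t \<le> ?x"
  proof -
    have "t < 2 ^ t" by (rule less_exp)
    moreover have "(1::nat) \<le> 2 ^ t" by simp
    moreover have "(2::nat) ^ (t + 1) = 2 * 2 ^ t" by simp
    ultimately show ?thesis using code_prog[of t w] by linarith
  qed
  have "tdec ?x = (\<Sum>j<?x. if j < t then 1 else 0)" unfolding tdec_def using iff by simp
  also have "\<dots> = card {j. j < ?x \<and> j < t}" by (simp add: sum.If_cases Int_def)
  also have "{j. j < ?x \<and> j < t} = {..<t}" using tx by auto
  finally show ?thesis by simp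
qed

lemma ed_prog: "ed (word_code (replicate t True @ False # w)) = word_code w"
  unfolding ed_def tdec_prog iter_tlc_code by simp

lemma Phi_prog:
  assumes "Phi x y"
  shows "\<exists>t w. x = word_code (replicate t True @ False # w) \<and> length w = Lf t"
proof -
  let ?t = "tdec x"
  obtain w where w: "word_code w = ed x" using word_code_surj by blast
  have "length w = Lf ?t" using assms unfolding Phi_def by (intro word_code_len) (auto simp: w)
  moreover have "x = word_code (replicate ?t True @ False # w)"
    using assms code_prog[of ?t w] unfolding Phi_def w by simp
  ultimately show ?thesis by blast
qed

lemma rank_mono:
  assumes "y1 < y2" "2 ^ Nf t \<le> y1 + 1" "good y1 (Bf t)"
  shows "rank y1 t < rank y2 t"
proof -
  let ?f = "\<lambda>y'. if 2 ^ Nf t \<le> y' + 1 \<and> good y' (Bf t) then 1 else (0::nat)"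
  have "{..<y2} = {..<y1} \<union> {y1..<y2}" using assms by auto
  then have "rank y2 t = rank y1 t + (\<Sum>y'\<in>{y1..<y2}. ?f y')"
    unfolding rank_def by (simp add: sum.union_disjoint ivl_disj_int)
  moreover have "(\<Sum>y'\<in>{y1..<y2}. ?f y') \<ge> ?f y1"
    by (rule member_le_sum) (use assms in auto)
  ultimately show ?thesis using assms by simp
qed

lemma Phi_unique: "Phi x y1 \<Longrightarrow> Phi x y2 \<Longrightarrow> y1 = y2"
proof (rule ccontr)
  assume a: "Phi x y1" "Phi x y2" "y1 \<noteq> y2"
  then consider "y1 < y2" | "y2 < y1" by linarith
  then show False
  proof cases
    case 1 then show False using rank_mono[of y1 y2 "tdec x"] a unfolding Phi_def by auto
  next
    case 2 then show False using rank_mono[of y2 y1 "tdec x"] a unfolding Phi_def by auto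
  qed
qed

lemma prefix_free:
  assumes c: "\<forall>x y. rec_eval c [x] y \<longleftrightarrow> Phi x y \<and> (\<forall>m<y. \<not> Phi x m)"
  shows "prefix_free_machine c"
  unfolding prefix_free_machine_def
proof (intro allI impI)
  fix p r assume h1: "halts c p" and h2: "halts c (p @ r)"
  from h1 obtain s where "Phi (word_code p) (word_code s)" using c unfolding halts_def runs_def by blast
  then obtain t w where tw: "word_code p = word_code (replicate t True @ False # w)" "length w = Lf t"
    using Phi_prog by blast
  from h2 obtain s' where "Phi (word_code (p @ r)) (word_code s')" using c unfolding halts_def runs_def by blast
  then obtain t' w' where tw': "word_code (p @ r) = word_code (replicate t' True @ False # w')" "length w' = Lf t'"
    using Phi_prog by blast
  have "p = replicate t True @ False # w" using tw word_code_inj by blast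
  moreover have "p @ r = replicate t' True @ False # w'" using tw' word_code_inj by blast
  ultimately have "replicate t True @ False # (w @ r) = replicate t' True @ False # w'" by simp
  then have "t = t'" "w @ r = w'" using rep_eq by blast+
  then show "r = []" using tw tw' by (metis append_eq_append_conv append_self_conv)
qed

lemma compress:
  assumes c: "\<forall>x y. rec_eval c [x] y \<longleftrightarrow> Phi x y \<and> (\<forall>m<y. \<not> Phi x m)"
    and len: "length s = Nf t" and g: "good (word_code s) (Bf t)"
    and rk: "rank (word_code s) t < 2 ^ Lf t"
  shows "\<exists>p. runs c p s \<and> length p = Suc t + Lf t"
proof -
  obtain w where w: "word_code w = rank (word_code s) t + 2 ^ Lf t - 1" using word_code_surj by blast
  have lw: "length w = Lf t"
    by (rule word_code_len) (use rk w in \<open>auto simp: algebra_simps\<close>)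
  let ?p = "replicate t True @ False # w"
  have "Phi (word_code ?p) (word_code s)"
    unfolding Phi_def tdec_prog ed_prog
    using code_prog[of t w] w lw g word_code_range[of s] len rk by auto
  then have "rec_eval c [word_code ?p] (word_code s)" using c Phi_unique by blast
  then show ?thesis using lw unfolding runs_def by (intro exI[of _ ?p]) auto
qed

end


definition GS :: "nat \<Rightarrow> (nat \<Rightarrow> nat set) \<Rightarrow> (nat \<Rightarrow> nat \<Rightarrow> bool) \<Rightarrow> nat \<Rightarrow> bool list set" where
  "GS N P \<tau> B = {w. length w = N \<and> (\<forall>b<B. \<not> (\<forall>p\<in>P b. w ! p = \<tau> b p))}"

lemma GS_finite: "finite (GS N P \<tau> B)"
proof -
  have "GS N P \<tau> B \<subseteq> {w. set w \<subseteq> UNIV \<and> length w = N}" unfolding GS_def by auto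
  then show ?thesis using finite_lists_length_eq[of "UNIV :: bool set" N] finite_subset by auto
qed

lemma card_le_fibers:
  assumes fin: "finite A" and fib: "\<And>v. v \<in> f ` A \<Longrightarrow> card {a\<in>A. f a = v} \<le> K"
  shows "card A \<le> K * card (f ` A)"
proof -
  have eq: "(\<Union>v\<in>f ` A. {a\<in>A. f a = v}) = A" by auto
  have "card (\<Union>v\<in>f ` A. {a\<in>A. f a = v}) \<le> (\<Sum>v\<in>f ` A. card {a\<in>A. f a = v})"
    by (rule card_UN_le) (simp add: fin)
  then have "card A \<le> (\<Sum>v\<in>f ` A. card {a\<in>A. f a = v})" unfolding eq .
  also have "\<dots> \<le> (\<Sum>v\<in>f ` A. K)" by (rule sum_mono) (rule fib)
  finally show ?thesis by (simp add: mult.commute)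
qed

lemma count_step:
  assumes sub: "P B \<subseteq> {..<N}" and ck: "card (P B) = k"
    and disj: "\<forall>b<B. P b \<inter> P B = {}" and subs: "\<forall>b<B. P b \<subseteq> {..<N}"
  shows "2 ^ k * card (GS N P \<tau> (Suc B)) \<le> (2 ^ k - 1) * card (GS N P \<tau> B)"
proof -
  let ?G = "GS N P \<tau> B"
  let ?E = "{w\<in>?G. \<forall>p\<in>P B. w ! p = \<tau> B p}"
  have GS_Suc: "GS N P \<tau> (Suc B) = ?G - ?E" unfolding GS_def by (auto simp: less_Suc_eq)
  have finE: "finite ?E" using GS_finite by auto
  define \<phi> where "\<phi> w = map (\<lambda>i. if i \<in> P B then \<tau> B i else w ! i) [0..<N]" for w
  have phiE: "\<phi> ` ?G \<subseteq> ?E"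
  proof
    fix v assume "v \<in> \<phi> ` ?G"
    then obtain w where w: "w \<in> ?G" "v = \<phi> w" by blast
    have lv: "length v = N" using w by (simp add: \<phi>_def)
    have "\<forall>b<B. \<not> (\<forall>p\<in>P b. v ! p = \<tau> b p)"
    proof (intro allI impI)
      fix b assume b: "b < B"
      have "\<forall>p\<in>P b. v ! p = w ! p"
      proof
        fix p assume p: "p \<in> P b"
        then have "p \<notin> P B" "p < N" using b disj subs by auto
        then show "v ! p = w ! p" by (simp add: w(2) \<phi>_def)
      qed
      then show "\<not> (\<forall>p\<in>P b. v ! p = \<tau> b p)" using w(1) b unfolding GS_def by auto
    qed
    moreover have "\<forall>p\<in>P B. v ! p = \<tau> B p" using sub by (auto simp: w(2) \<phi>_def)
    ultimately show "v \<in> ?E" using lv unfolding GS_def by auto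
  qed
  have fib: "card {w\<in>?G. \<phi> w = v} \<le> 2 ^ k" for v
  proof -
    let ?r = "\<lambda>w. {i\<in>P B. w ! i}"
    have "inj_on ?r {w\<in>?G. \<phi> w = v}"
    proof (rule inj_onI)
      fix w1 w2 assume a: "w1 \<in> {w\<in>?G. \<phi> w = v}" "w2 \<in> {w\<in>?G. \<phi> w = v}" "?r w1 = ?r w2"
      have l: "length w1 = N" "length w2 = N" using a unfolding GS_def by auto
      show "w1 = w2"
      proof (rule nth_equalityI)
        show "length w1 = length w2" using l by simp
      next
        fix i assume i: "i < length w1"
        show "w1 ! i = w2 ! i"
        proof (cases "i \<in> P B")
          case True then show ?thesis using a(3) by blast
        next
          case False
          have "\<phi> w1 ! i = \<phi> w2 ! i" using a by simp
          then show ?thesis using False i l by (simp add: \<phi>_def)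
        qed
      qed
    qed
    moreover have "?r ` {w\<in>?G. \<phi> w = v} \<subseteq> Pow (P B)" by auto
    moreover have "finite (P B)" using sub finite_subset by blast
    ultimately have "card {w\<in>?G. \<phi> w = v} \<le> card (Pow (P B))"
      by (intro card_inj_on_le) auto
    then show ?thesis using card_Pow[of "P B"] \<open>finite (P B)\<close> ck by simp
  qed
  have "card ?G \<le> 2 ^ k * card (\<phi> ` ?G)"
    by (rule card_le_fibers) (use GS_finite fib in auto)
  also have "\<dots> \<le> 2 ^ k * card ?E" using card_mono[OF finE phiE] by simp
  finally have cG: "card ?G \<le> 2 ^ k * card ?E" .
  have "card (GS N P \<tau> (Suc B)) = card ?G - card ?E"
    unfolding GS_Suc by (rule card_Diff_subset) (use finE in auto)
  then have "2 ^ k * card (GS N P \<tau> (Suc B)) = 2 ^ k * card ?G - 2 ^ k * card ?E"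
    by (simp add: diff_mult_distrib2)
  also have "\<dots> \<le> 2 ^ k * card ?G - card ?G" using cG by linarith
  also have "\<dots> = (2 ^ k - 1) * card ?G" by (simp add: diff_mult_distrib)
  finally show ?thesis .
qed

lemma count_good:
  assumes "\<forall>b<B. P b \<subseteq> {..<N}" "\<forall>b<B. card (P b) = k"
    "\<forall>b<B. \<forall>b'<B. b \<noteq> b' \<longrightarrow> P b \<inter> P b' = {}"
  shows "2 ^ (k * B) * card (GS N P \<tau> B) \<le> (2 ^ k - 1) ^ B * 2 ^ N"
  using assms
proof (induction B)
  case 0
  have "GS N P \<tau> 0 = {w. set w \<subseteq> UNIV \<and> length w = N}" unfolding GS_def by auto
  moreover have "card {w::bool list. set w \<subseteq> UNIV \<and> length w = N} = 2 ^ N"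
    by (subst card_lists_length_eq) auto
  ultimately show ?case by simp
next
  case (Suc B)
  have IH: "2 ^ (k * B) * card (GS N P \<tau> B) \<le> (2 ^ k - 1) ^ B * 2 ^ N"
    using Suc.prems by (intro Suc.IH) auto
  have st: "2 ^ k * card (GS N P \<tau> (Suc B)) \<le> (2 ^ k - 1) * card (GS N P \<tau> B)"
    by (rule count_step) (use Suc.prems in \<open>auto\<close>)
  have "2 ^ (k * Suc B) * card (GS N P \<tau> (Suc B)) = 2 ^ (k * B) * (2 ^ k * card (GS N P \<tau> (Suc B)))"
    by (simp add: power_add algebra_simps)
  also have "\<dots> \<le> 2 ^ (k * B) * ((2 ^ k - 1) * card (GS N P \<tau> B))"
    using st by (rule mult_left_mono) simp
  also have "\<dots> = (2 ^ k - 1) * (2 ^ (k * B) * card (GS N P \<tau> B))" by (simp add: algebra_simps)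
  also have "\<dots> \<le> (2 ^ k - 1) * ((2 ^ k - 1) ^ B * 2 ^ N)"
    using IH by (rule mult_left_mono) simp
  finally show ?case by (simp add: algebra_simps)
qed


lemma rcomp_psi:
  assumes "\<forall>n m. rec_eval c [j, n, m] (\<psi> j n m)"
  shows "rcomp 2 (\<lambda>xs. \<psi> j (xs!0) (xs!1))"
proof -
  obtain cc where cc: "\<forall>xs. length xs = 2 \<longrightarrow> rec_eval cc xs j"
    using rcomp_const[of 2 j] unfolding rcomp_def by blast
  show ?thesis unfolding rcomp_def
  proof (intro exI allI impI)
    fix xs :: "nat list" assume "length xs = 2"
    then obtain a b where xs: "xs = [a, b]" by (auto simp: len2)
    show "rec_eval (Cnf c [cc, Idf 0, Idf 1]) xs (\<psi> j (xs!0) (xs!1))"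
      unfolding xs
    proof (rule rec_eval.comp[where ys = "[j, a, b]"])
      have "rec_eval (Idf 0) [a, b] a" using rec_eval.proj[of 0 "[a, b]"] by simp
      moreover have "rec_eval (Idf 1) [a, b] b" using rec_eval.proj[of 1 "[a, b]"] by simp
      ultimately show "\<forall>k<length [cc, Idf 0, Idf 1]. rec_eval ([cc, Idf 0, Idf 1] ! k) [a, b] ([j, a, b] ! k)"
        using cc by (auto simp: less_Suc_eq numeral_eq_Suc)
    qed (use assms in auto)
  qed
qed

lemma bern: "(a + 1) ^ Suc n \<ge> a ^ Suc n + Suc n * a ^ n" for a :: nat
proof (induction n)
  case 0 then show ?case by simp
next
  case (Suc n)
  have "(a + 1) ^ Suc (Suc n) = (a + 1) * (a + 1) ^ Suc n" by simp
  also have "\<dots> \<ge> (a + 1) * (a ^ Suc n + Suc n * a ^ n)" using Suc by (intro mult_left_mono) auto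
  finally have "(a + 1) ^ Suc (Suc n) \<ge> (a + 1) * (a ^ Suc n + Suc n * a ^ n)" .
  moreover have "(a + 1) * (a ^ Suc n + Suc n * a ^ n) \<ge> a ^ Suc (Suc n) + Suc (Suc n) * a ^ Suc n"
    by (simp add: algebra_simps)
  ultimately show ?case by linarith
qed

lemma two_pow_bound: "M \<ge> 1 \<Longrightarrow> 2 * (M - 1) ^ M \<le> M ^ M" for M :: nat
proof -
  assume "M \<ge> 1"
  then obtain n where M: "M = Suc n" by (cases M) auto
  have "(n + 1) ^ Suc n \<ge> n ^ Suc n + Suc n * n ^ n" by (rule bern)
  moreover have "Suc n * n ^ n \<ge> n ^ Suc n" by simp
  ultimately show ?thesis using M by simp
qed

lemma KH_le: "runs u q s \<Longrightarrow> KH u s \<le> enat (length q)"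
  unfolding KH_def by (rule INF_lower) simp


lemma ext_lemma:
  fixes \<psi> :: "nat \<Rightarrow> nat \<Rightarrow> nat \<Rightarrow> nat"
  assumes l: "l \<ge> 2" and u: "universal_prefix_machine u"
    and cpsi: "\<And>j n m. j < l - 1 \<Longrightarrow> rec_eval c\<psi> [j, n, m] (\<psi> j n m)"
    and inj: "inj_on (\<lambda>(i, n, m). \<psi> i n m) ({..<l - 1} \<times> UNIV \<times> UNIV)"
    and kc: "KC_complex u \<alpha>"
    and i: "i < l"
    and fin: "finite MX" "finite MY" "finite MX'" "finite MY'"
    and disj: "MX \<inter> MY = {}" "MX' \<inter> MY' = {}"
    and up: "MX \<union> MY \<noteq> {} \<Longrightarrow> i + 1 < l"
    and lo: "MX' \<union> MY' \<noteq> {} \<Longrightarrow> 0 < i"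
  shows "\<exists>n\<ge>n0. (\<forall>m\<in>MX. \<alpha> (\<psi> i n m)) \<and> (\<forall>m\<in>MY. \<not> \<alpha> (\<psi> i n m)) \<and>
                (\<forall>m\<in>MX'. \<alpha> (\<psi> (i - 1) m n)) \<and> (\<forall>m\<in>MY'. \<not> \<alpha> (\<psi> (i - 1) m n))"
proof (rule ccontr)
  assume H: "\<not> ?thesis"
  define cs where "cs = map (\<lambda>m. (True, m, True)) (sorted_list_of_set MX) @
      map (\<lambda>m. (True, m, False)) (sorted_list_of_set MY) @
      map (\<lambda>m. (False, m, True)) (sorted_list_of_set MX') @
      map (\<lambda>m. (False, m, False)) (sorted_list_of_set MY')"
  have setcs: "set cs = (\<lambda>m. (True, m, True)) ` MX \<union> (\<lambda>m. (True, m, False)) ` MY \<union>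
      (\<lambda>m. (False, m, True)) ` MX' \<union> (\<lambda>m. (False, m, False)) ` MY'"
    unfolding cs_def using fin by auto
  have cs_ne: "cs \<noteq> []"
  proof
    assume "cs = []"
    then have "MX = {}" "MY = {}" "MX' = {}" "MY' = {}" using setcs by auto
    then show False using H by auto
  qed
  define k where "k = card (set cs)"
  have k1: "k \<ge> 1" using cs_ne unfolding k_def by (simp add: card_gt_0_iff Suc_le_eq)
  define M :: nat where "M = 2 ^ k"
  have M1: "M \<ge> 1" unfolding M_def by simp
  have il: "i - 1 < l - 1" using l i by linarith
  have psi_inj: "\<psi> a b c = \<psi> a' b' c' \<Longrightarrow> a < l - 1 \<Longrightarrow> a' < l - 1 \<Longrightarrow> a = a' \<and> b = b' \<and> c = c'" for a b c a' b' c'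
    using inj_onD[OF inj, of "(a, b, c)" "(a', b', c')"] by auto
  have upi: "i < l - 1" if "fst c" "c \<in> set cs" for c
  proof -
    have "MX \<union> MY \<noteq> {}" using that unfolding setcs by auto
    then show ?thesis using up by linarith
  qed
  have loi: "0 < i" if "\<not> fst c" "c \<in> set cs" for c
  proof -
    have "MX' \<union> MY' \<noteq> {}" using that unfolding setcs by auto
    then show ?thesis using lo by blast
  qed
  interpret mach \<psi> i n0 M cs
  proof
    assume "\<exists>c\<in>set cs. fst c"
    then have "i < l - 1" using upi by blast
    then show "rcomp 2 (\<lambda>xs. \<psi> i (xs!0) (xs!1))" by (intro rcomp_psi) (use cpsi in blast)
  next
    show "rcomp 2 (\<lambda>xs. \<psi> (i - 1) (xs!0) (xs!1))" by (intro rcomp_psi) (use cpsi il in blast)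
  qed
  obtain c where c: "\<forall>x y. rec_eval c [x] y \<longleftrightarrow> Phi x y \<and> (\<forall>m<y. \<not> Phi x m)"
    using machine_exists by blast
  have pf: "prefix_free_machine c" using prefix_free c by blast
  obtain kc where kcu: "\<forall>p s. runs c p s \<longrightarrow> (\<exists>q. runs u q s \<and> length q \<le> length p + kc)"
    using u pf unfolding universal_prefix_machine_def by blast
  obtain m0 where m0: "\<forall>n. enat n \<le> KH u (initial_segment \<alpha> n) + enat m0"
    using kc unfolding KC_complex_def by blast
  define t where "t = kc + m0 + 1"
  define N where "N = Nf t"
  define B where "B = Bf t"
  define s where "s = initial_segment \<alpha> N"
  have ls: "length s = N" unfolding s_def initial_segment_def by simp
  have s_nth: "j < N \<Longrightarrow> s ! j = \<alpha> j" for j unfolding s_def initial_segment_def by simp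
  have pos_lt: "b < B \<Longrightarrow> c' \<in> set cs \<Longrightarrow> pos c' b < N" for b c'
  proof -
    assume b: "b < B" and c': "c' \<in> set cs"
    have "Suc (pos c' b) \<le> blocksum b" unfolding blocksum_def
      by (rule member_le_sum_list) (use c' in auto)
    also have "blocksum b \<le> N" unfolding N_def Nf_def
      by (rule member_le_sum) (use b B_def in auto)
    finally show ?thesis by simp
  qed
  have pos_inj: "pos c1 b1 = pos c2 b2 \<Longrightarrow> c1 \<in> set cs \<Longrightarrow> c2 \<in> set cs \<Longrightarrow> b1 = b2 \<and> fst c1 = fst c2 \<and> fst (snd c1) = fst (snd c2)" for c1 c2 b1 b2
  proof -
    assume e: "pos c1 b1 = pos c2 b2" and c1: "c1 \<in> set cs" and c2: "c2 \<in> set cs"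
    obtain f1 m1 \<beta>1 where c1e: "c1 = (f1, m1, \<beta>1)" by (cases c1) auto
    obtain f2 m2 \<beta>2 where c2e: "c2 = (f2, m2, \<beta>2)" by (cases c2) auto
    show ?thesis
    proof (cases f1; cases f2)
      assume a: "f1" "f2"
      then have e': "\<psi> i (n0 + b1) m1 = \<psi> i (n0 + b2) m2" using e by (simp add: pos_def c1e c2e)
      have "i < l - 1" using upi[of c1] c1 a c1e by simp
      from psi_inj[OF e' this this] show ?thesis using a by (simp add: c1e c2e)
    next
      assume a: "f1" "\<not> f2"
      then have e': "\<psi> i (n0 + b1) m1 = \<psi> (i - 1) m2 (n0 + b2)" using e by (simp add: pos_def c1e c2e)
      have "i < l - 1" using upi[of c1] c1 a c1e by simp
      from psi_inj[OF e' this il] have "i = i - 1" by simp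
      moreover have "0 < i" using loi[of c2] c2 a c2e by simp
      ultimately show ?thesis by simp
    next
      assume a: "\<not> f1" "f2"
      then have e': "\<psi> (i - 1) m1 (n0 + b1) = \<psi> i (n0 + b2) m2" using e by (simp add: pos_def c1e c2e)
      have "i < l - 1" using upi[of c2] c2 a c2e by simp
      from psi_inj[OF e' il this] have "i - 1 = i" by simp
      moreover have "0 < i" using loi[of c1] c1 a c1e by simp
      ultimately show ?thesis by simp
    next
      assume a: "\<not> f1" "\<not> f2"
      then have e': "\<psi> (i - 1) m1 (n0 + b1) = \<psi> (i - 1) m2 (n0 + b2)" using e by (simp add: pos_def c1e c2e)
      from psi_inj[OF e' il il] show ?thesis using a by (simp add: c1e c2e)
    qed
  qed
  have cs_det: "c1 \<in> set cs \<Longrightarrow> c2 \<in> set cs \<Longrightarrow> fst c1 = fst c2 \<Longrightarrow> fst (snd c1) = fst (snd c2) \<Longrightarrow> c1 = c2" for c1 c2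
    using disj unfolding setcs by auto
  define P where "P b = (\<lambda>c'. pos c' b) ` set cs" for b
  define \<tau> where "\<tau> b p = (\<exists>c'\<in>set cs. pos c' b = p \<and> snd (snd c'))" for b p
  have match_iff: "match (word_code w) b \<longleftrightarrow> (\<forall>p\<in>P b. w ! p = \<tau> b p)"
    if "length w = N" "b < B" for w b
  proof -
    have "match (word_code w) b \<longleftrightarrow> (\<forall>c'\<in>set cs. w ! pos c' b = snd (snd c'))"
      unfolding match_def bitb_code using pos_lt that by auto
    also have "\<dots> \<longleftrightarrow> (\<forall>p\<in>P b. w ! p = \<tau> b p)"
    proof -
      have "\<tau> b (pos c' b) = snd (snd c')" if "c' \<in> set cs" for c'
        unfolding \<tau>_def using that pos_inj cs_det by blast
      then show ?thesis unfolding P_def by auto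
    qed
    finally show ?thesis .
  qed
  have good_s: "good (word_code s) B"
    unfolding good_def
  proof (intro allI impI notI)
    fix b assume b: "b < B" and mt: "match (word_code s) b"
    have pat: "\<alpha> (pos c' b) = snd (snd c')" if "c' \<in> set cs" for c'
    proof -
      have "bitb (word_code s) (pos c' b) = snd (snd c')" using mt that unfolding match_def by blast
      then show ?thesis unfolding bitb_code using pos_lt[OF b that] by (simp add: ls s_nth)
    qed
    have Q: "(\<forall>m\<in>MX. \<alpha> (\<psi> i (n0 + b) m)) \<and> (\<forall>m\<in>MY. \<not> \<alpha> (\<psi> i (n0 + b) m)) \<and>
          (\<forall>m\<in>MX'. \<alpha> (\<psi> (i - 1) m (n0 + b))) \<and> (\<forall>m\<in>MY'. \<not> \<alpha> (\<psi> (i - 1) m (n0 + b)))"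
    proof (intro conjI ballI)
      fix m assume "m \<in> MX" then have "(True, m, True) \<in> set cs" unfolding setcs by blast
      from pat[OF this] show "\<alpha> (\<psi> i (n0 + b) m)" by (simp add: pos_def)
    next
      fix m assume "m \<in> MY" then have "(True, m, False) \<in> set cs" unfolding setcs by blast
      from pat[OF this] show "\<not> \<alpha> (\<psi> i (n0 + b) m)" by (simp add: pos_def)
    next
      fix m assume "m \<in> MX'" then have "(False, m, True) \<in> set cs" unfolding setcs by blast
      from pat[OF this] show "\<alpha> (\<psi> (i - 1) m (n0 + b))" by (simp add: pos_def)
    next
      fix m assume "m \<in> MY'" then have "(False, m, False) \<in> set cs" unfolding setcs by blast
      from pat[OF this] show "\<not> \<alpha> (\<psi> (i - 1) m (n0 + b))" by (simp add: pos_def)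
    qed
    have "\<exists>n\<ge>n0. (\<forall>m\<in>MX. \<alpha> (\<psi> i n m)) \<and> (\<forall>m\<in>MY. \<not> \<alpha> (\<psi> i n m)) \<and>
                (\<forall>m\<in>MX'. \<alpha> (\<psi> (i - 1) m n)) \<and> (\<forall>m\<in>MY'. \<not> \<alpha> (\<psi> (i - 1) m n))"
      by (rule exI[of _ "n0 + b"]) (rule conjI[OF le_add1 Q])
    with H show False by (rule notE)
  qed
  have NB: "B \<le> N"
  proof -
    have "1 \<le> blocksum b" for b unfolding blocksum_def using cs_ne by (cases cs) auto
    then have "(\<Sum>b<B. 1) \<le> (\<Sum>b<B. blocksum b)" by (intro sum_mono)
    then show ?thesis unfolding N_def Nf_def B_def by simp
  qed
  have tB: "2 * t + 1 \<le> B" unfolding B_def Bf_def using mult_le_mono2[OF M1, of "2 * t + 1"] by simp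
  have LN: "Lf t + (2 * t + 1) = N" unfolding Lf_def N_def[symmetric] using NB tB by simp
  have cnt: "2 ^ (k * B) * card (GS N P \<tau> B) \<le> (2 ^ k - 1) ^ B * 2 ^ N"
  proof (rule count_good)
    show "\<forall>b<B. P b \<subseteq> {..<N}" using pos_lt unfolding P_def by auto
    show "\<forall>b<B. card (P b) = k" unfolding P_def k_def
    proof (intro allI impI card_image inj_onI)
      fix b c1 c2 assume "c1 \<in> set cs" "c2 \<in> set cs" "pos c1 b = pos c2 b"
      then show "c1 = c2" using pos_inj cs_det by blast
    qed
    show "\<forall>b<B. \<forall>b'<B. b \<noteq> b' \<longrightarrow> P b \<inter> P b' = {}" unfolding P_def using pos_inj by blast
  qed
  have cardG: "card (GS N P \<tau> B) \<le> 2 ^ Lf t"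
  proof -
    have "2 * (M - 1) ^ M \<le> M ^ M" using two_pow_bound M1 by blast
    then have le: "(2 * (M - 1) ^ M) ^ (2 * t + 1) \<le> (M ^ M) ^ (2 * t + 1)" by (rule power_mono) simp
    have e1: "(2 * (M - 1) ^ M) ^ (2 * t + 1) = 2 ^ (2 * t + 1) * (M - 1) ^ B"
      unfolding B_def Bf_def power_mult_distrib power_mult[of "M - 1" M "2 * t + 1", symmetric]
      by (simp add: mult.commute)
    have e2: "(M ^ M) ^ (2 * t + 1) = M ^ B"
      unfolding B_def Bf_def power_mult[of M M "2 * t + 1", symmetric] by (simp add: mult.commute)
    have A: "2 ^ (2 * t + 1) * (M - 1) ^ B \<le> M ^ B" using le unfolding e1 e2 .
    have "2 ^ (k * B) = M ^ B" unfolding M_def by (simp add: power_mult)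
    then have "M ^ B * card (GS N P \<tau> B) \<le> (M - 1) ^ B * 2 ^ N" using cnt unfolding M_def by simp
    then have "2 ^ (2 * t + 1) * (M ^ B * card (GS N P \<tau> B)) \<le> 2 ^ (2 * t + 1) * ((M - 1) ^ B * 2 ^ N)"
      by (rule mult_left_mono) simp
    also have "\<dots> \<le> M ^ B * 2 ^ N" using A by (simp add: mult.assoc[symmetric])
    finally have X: "2 ^ (2 * t + 1) * (M ^ B * card (GS N P \<tau> B)) \<le> M ^ B * 2 ^ N" .
    have N2: "(2::nat) ^ N = 2 ^ (2 * t + 1) * 2 ^ Lf t" using LN power_add by (metis add.commute)
    have "M ^ B * (2 ^ (2 * t + 1) * card (GS N P \<tau> B)) \<le> M ^ B * (2 ^ (2 * t + 1) * 2 ^ Lf t)"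
      using X unfolding N2 by (simp only: mult_ac)
    then have "2 ^ (2 * t + 1) * card (GS N P \<tau> B) \<le> 2 ^ (2 * t + 1) * 2 ^ Lf t"
      using M1 by (subst (asm) nat_mult_le_cancel1) simp_all
    then show ?thesis by (subst (asm) nat_mult_le_cancel1) simp_all
  qed
  have rank_s: "rank (word_code s) t < 2 ^ Lf t"
  proof -
    let ?R = "{y'. y' < word_code s \<and> 2 ^ N \<le> y' + 1 \<and> good y' B}"
    have rk: "rank (word_code s) t = card ?R"
      unfolding rank_def N_def[symmetric] B_def[symmetric] by (simp add: sum.If_cases Int_def lessThan_def)
    have sub: "insert (word_code s) ?R \<subseteq> word_code ` GS N P \<tau> B"
    proof
      fix y assume y: "y \<in> insert (word_code s) ?R"
      obtain w where w: "word_code w = y" using word_code_surj by blast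
      have "2 ^ N \<le> y + 1 \<and> y + 2 \<le> 2 ^ (N + 1) \<and> good y B"
        using y word_code_range[of s] ls good_s by auto
      then have lw: "length w = N" and gw: "good (word_code w) B" using w word_code_len by auto
      have "w \<in> GS N P \<tau> B" unfolding GS_def using gw lw match_iff unfolding good_def by auto
      then show "y \<in> word_code ` GS N P \<tau> B" using w by blast
    qed
    have "card (insert (word_code s) ?R) \<le> card (word_code ` GS N P \<tau> B)"
      by (rule card_mono[OF _ sub]) (simp add: GS_finite)
    also have "\<dots> \<le> card (GS N P \<tau> B)" by (rule card_image_le) (simp add: GS_finite)
    finally have "card (insert (word_code s) ?R) \<le> 2 ^ Lf t" using cardG by linarith
    moreover have "card (insert (word_code s) ?R) = Suc (card ?R)" by (subst card_insert_disjoint) auto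
    ultimately show ?thesis using rk by simp
  qed
  obtain p where p: "runs c p s" "length p = Suc t + Lf t"
    using compress[OF c] ls good_s rank_s unfolding N_def B_def by blast
  obtain q where q: "runs u q s" "length q \<le> length p + kc" using kcu p by blast
  have "enat N \<le> KH u s + enat m0" using m0 unfolding s_def by blast
  also have "\<dots> \<le> enat (length q) + enat m0" using KH_le[OF q(1)] by (intro add_right_mono)
  finally have "N \<le> length q + m0" by simp
  moreover have "length q \<le> Suc t + Lf t + kc" using q p by simp
  ultimately have "Lf t + (2 * t + 1) \<le> Suc t + Lf t + kc + m0" using LN by linarith
  moreover have "t = kc + m0 + 1" by (rule t_def)
  ultimately show False by linarith
qed


lemma S_alpha_iff: "S_alpha l \<psi> \<alpha> (a, b) (c, d) \<longleftrightarrow> c = a + 1 \<and> a < l - 1 \<and> \<alpha> (\<psi> a b d)"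
  unfolding S_alpha_def by auto

theorem theorem4:
  fixes l :: nat and \<psi> :: "nat \<Rightarrow> nat \<Rightarrow> nat \<Rightarrow> nat"
    and \<alpha> :: "nat \<Rightarrow> bool" and u :: recf
  assumes "l \<ge> 2"
    and "universal_prefix_machine u"
    and "recursive3_on ({..<l - 1} \<times> UNIV \<times> UNIV) \<psi>"
    and "bij_betw (\<lambda>(i, n, m). \<psi> i n m) ({..<l - 1} \<times> UNIV \<times> UNIV) UNIV"
    and "KC_complex u \<alpha>"
  shows "model_T l ({..<l} \<times> UNIV) (\<lambda>j. {j} \<times> UNIV) (S_alpha l \<psi> \<alpha>)"
proof -
  note l = assms(1) and u = assms(2) and kc = assms(5)
  obtain c\<psi> where c\<psi>: "\<forall>(i, n, m) \<in> {..<l - 1} \<times> UNIV \<times> UNIV. rec_eval c\<psi> [i, n, m] (\<psi> i n m)"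
    using assms(3) unfolding recursive3_on_def by blast
  have cpsi: "\<And>j n m. j < l - 1 \<Longrightarrow> rec_eval c\<psi> [j, n, m] (\<psi> j n m)" using c\<psi> by auto
  have inj: "inj_on (\<lambda>(i, n, m). \<psi> i n m) ({..<l - 1} \<times> UNIV \<times> UNIV)"
    using assms(4) by (rule bij_betw_imp_inj_on)
  let ?A = "{..<l} \<times> (UNIV :: nat set)"
  let ?L = "\<lambda>j. {j} \<times> (UNIV :: nat set)"
  let ?S = "S_alpha l \<psi> \<alpha>"
  show ?thesis unfolding model_T_def
  proof (intro conjI)
    show "\<forall>x\<in>?A. \<exists>j<l. x \<in> ?L j" by auto
    show "\<forall>x\<in>?A. \<forall>i j. i < j \<and> j < l \<longrightarrow> \<not> (x \<in> ?L i \<and> x \<in> ?L j)" by auto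
    show "\<forall>x\<in>?A. \<forall>y\<in>?A. \<forall>i. ?S x y \<and> x \<in> ?L i \<and> i + 2 \<le> l \<longrightarrow> y \<in> ?L (i + 1)"
      unfolding S_alpha_def by auto
    show "\<forall>i<l. \<forall>X Y Z X' Y'.
        let Up = (if i + 1 < l then ?A \<inter> ?L (i + 1) else {});
            Lo = (if 0 < i then ?A \<inter> ?L (i - 1) else {})
        in finite X \<and> finite Y \<and> X \<subseteq> Up \<and> Y \<subseteq> Up \<and> X \<inter> Y = {} \<and>
           finite Z \<and> Z \<subseteq> ?A \<inter> ?L i \<and>
           finite X' \<and> finite Y' \<and> X' \<subseteq> Lo \<and> Y' \<subseteq> Lo \<and> X' \<inter> Y' = {} \<longrightarrow>
           (\<exists>z \<in> (?A \<inter> ?L i) - Z. (\<forall>x \<in> X. ?S z x) \<and> (\<forall>x' \<in> X'. ?S x' z) \<and>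
                                  (\<forall>y \<in> Y. \<not> ?S z y) \<and> (\<forall>y' \<in> Y'. \<not> ?S y' z))"
    proof (unfold Let_def, intro allI impI, elim conjE)
      fix i X Y Z X' Y'
      assume i: "i < l" and fX: "finite X" and fY: "finite Y"
        and XU: "X \<subseteq> (if i + 1 < l then ?A \<inter> ?L (i + 1) else {})"
        and YU: "Y \<subseteq> (if i + 1 < l then ?A \<inter> ?L (i + 1) else {})"
        and XY: "X \<inter> Y = {}" and fZ: "finite Z" and ZL: "Z \<subseteq> ?A \<inter> ?L i"
        and fX': "finite X'" and fY': "finite Y'"
        and XL: "X' \<subseteq> (if 0 < i then ?A \<inter> ?L (i - 1) else {})"
        and YL: "Y' \<subseteq> (if 0 < i then ?A \<inter> ?L (i - 1) else {})"
        and XY': "X' \<inter> Y' = {}"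
      have Xf: "x \<in> X \<Longrightarrow> x = (i + 1, snd x) \<and> i + 1 < l" for x
        using XU by (cases "i + 1 < l") auto
      have Yf: "x \<in> Y \<Longrightarrow> x = (i + 1, snd x) \<and> i + 1 < l" for x
        using YU by (cases "i + 1 < l") auto
      have X'f: "x \<in> X' \<Longrightarrow> x = (i - 1, snd x) \<and> 0 < i" for x
        using XL by (cases "0 < i") auto
      have Y'f: "x \<in> Y' \<Longrightarrow> x = (i - 1, snd x) \<and> 0 < i" for x
        using YL by (cases "0 < i") auto
      define n0 where "n0 = Suc (Max (insert 0 (snd ` Z)))"
      have d1: "snd ` X \<inter> snd ` Y = {}"
      proof (rule ccontr)
        assume "snd ` X \<inter> snd ` Y \<noteq> {}"
        then obtain x y where xy: "x \<in> X" "y \<in> Y" "snd x = snd y" by blast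
        have "fst x = i + 1" "fst y = i + 1" using Xf[OF xy(1)] Yf[OF xy(2)] by (metis fst_conv)+
        then have "x = y" using xy(3) by (simp add: prod_eq_iff)
        then show False using xy XY by blast
      qed
      have d2: "snd ` X' \<inter> snd ` Y' = {}"
      proof (rule ccontr)
        assume "snd ` X' \<inter> snd ` Y' \<noteq> {}"
        then obtain x y where xy: "x \<in> X'" "y \<in> Y'" "snd x = snd y" by blast
        have "fst x = i - 1" "fst y = i - 1" using X'f[OF xy(1)] Y'f[OF xy(2)] by (metis fst_conv)+
        then have "x = y" using xy(3) by (simp add: prod_eq_iff)
        then show False using xy XY' by blast
      qed
      have upl: "i + 1 < l" if ne: "snd ` X \<union> snd ` Y \<noteq> {}"
      proof -
        obtain x where "x \<in> X \<or> x \<in> Y" using ne by blast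
        then show ?thesis using Xf Yf by blast
      qed
      have lol: "0 < i" if ne: "snd ` X' \<union> snd ` Y' \<noteq> {}"
      proof -
        obtain x where "x \<in> X' \<or> x \<in> Y'" using ne by blast
        then show ?thesis using X'f Y'f by blast
      qed
      have fin: "finite (snd ` X)" "finite (snd ` Y)" "finite (snd ` X')" "finite (snd ` Y')"
        using fX fY fX' fY' by auto
      have E: "\<exists>n\<ge>n0. (\<forall>m\<in>snd ` X. \<alpha> (\<psi> i n m)) \<and> (\<forall>m\<in>snd ` Y. \<not> \<alpha> (\<psi> i n m)) \<and>
                (\<forall>m\<in>snd ` X'. \<alpha> (\<psi> (i - 1) m n)) \<and> (\<forall>m\<in>snd ` Y'. \<not> \<alpha> (\<psi> (i - 1) m n))"
        by (rule ext_lemma[OF l u cpsi inj kc i fin d1 d2 upl lol])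
      obtain n where n: "n \<ge> n0" and
        pX: "\<forall>m\<in>snd ` X. \<alpha> (\<psi> i n m)" and pY: "\<forall>m\<in>snd ` Y. \<not> \<alpha> (\<psi> i n m)" and
        pX': "\<forall>m\<in>snd ` X'. \<alpha> (\<psi> (i - 1) m n)" and pY': "\<forall>m\<in>snd ` Y'. \<not> \<alpha> (\<psi> (i - 1) m n)"
        using E by (elim exE conjE) (rule that; assumption)
      have nZ: "(i, n) \<notin> Z"
      proof
        assume "(i, n) \<in> Z"
        then have "n \<in> insert 0 (snd ` Z)" by force
        then have "n \<le> Max (insert 0 (snd ` Z))" using fZ by (intro Max_ge) auto
        then show False using n unfolding n0_def by linarith
      qed
      show "\<exists>z \<in> (?A \<inter> ?L i) - Z. (\<forall>x \<in> X. ?S z x) \<and> (\<forall>x' \<in> X'. ?S x' z) \<and>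
                                  (\<forall>y \<in> Y. \<not> ?S z y) \<and> (\<forall>y' \<in> Y'. \<not> ?S y' z)"
      proof (rule bexI[of _ "(i, n)"], intro conjI ballI)
        fix x assume x: "x \<in> X"
        then have "x = (i + 1, snd x)" "i + 1 < l" using Xf by auto
        moreover have "\<alpha> (\<psi> i n (snd x))" using pX x by blast
        ultimately show "?S (i, n) x" by (metis S_alpha_iff less_diff_conv)
      next
        fix x assume x: "x \<in> X'"
        then have "x = (i - 1, snd x)" "0 < i" using X'f by auto
        moreover have "\<alpha> (\<psi> (i - 1) (snd x) n)" using pX' x by blast
        moreover have "i - 1 < l - 1" using i l by linarith
        ultimately show "?S x (i, n)" by (metis S_alpha_iff Suc_pred' Suc_eq_plus1)
      next
        fix x assume x: "x \<in> Y"
        then have "x = (i + 1, snd x)" using Yf by auto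
        moreover have "\<not> \<alpha> (\<psi> i n (snd x))" using pY x by blast
        ultimately show "\<not> ?S (i, n) x" by (metis S_alpha_iff)
      next
        fix x assume x: "x \<in> Y'"
        then have "x = (i - 1, snd x)" "0 < i" using Y'f by auto
        moreover have "\<not> \<alpha> (\<psi> (i - 1) (snd x) n)" using pY' x by blast
        ultimately show "\<not> ?S x (i, n)" by (metis S_alpha_iff)
      next
        show "(i, n) \<in> ?A \<inter> ?L i - Z" using i nZ by auto
      qed
    qed
  qed
qed


end
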